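(* Let $\tau,\nu$ be complex $n\times n$ matrices with $T=\sum_{j,k}\tau_{j,k}A_j^\dagger A_k$ and $V=\sum_{l,m}\nu_{l,m}N_lN_m$ Hermitian, set $H_0=V$, $H_1=T$, $\mu^0=\nu$, $\mu^1=\tau$, $H^0_{jk}=N_jN_k$, $H^1_{jk}=A_j^\dagger A_k$, and let $\boldsymbol\gamma=(\gamma_1,\dots,\gamma_{p+1})\in\{0,1\}^{p+1}$ with $|\boldsymbol\gamma|=\sum_q\gamma_q$. For each choice of index pairs $(j_q,k_q)$, $q=1,\dots,p+1$, fix an expansion of the nested commutator $[H^{\gamma_{p+1}}_{j_{p+1}k_{p+1}},\ldots[H^{\gamma_2}_{j_2k_2},H^{\gamma_1}_{j_1k_1}]]$ as a finite sum of terms ("fermionic paths") $P=(-1)^aY_1\cdots Y_r$, $a\in\{0,1\}$, each $Y_i$ one of $A_j^\dagger,A_k,N_l$ (the empty sum if the nested commutator is zero); write $P\rhd(H^{\gamma_{p+1}}_{j_{p+1}k_{p+1}},\ldots,H^{\gamma_1}_{j_1k_1})$ for the terms of this expansion. Then for $0\le\eta\le n$, $$\big\|[H_{\gamma_{p+1}},\cdots[H_{\gamma_2},H_{\gamma_1}]]\big\|_{\eta}\le\|\tau\|_{\max}^{|\boldsymbol\gamma|}\|\nu\|_{\max}^{p+1-|\boldsymbol\gamma|}\max_{\mathbf{c}_\eta}\deg(\mathbf{c}_\eta),$$ where $\mathbf{c}_\eta$ ranges over configurations in $\{0,1\}^n$ with exactly $\eta$ ones and $$\deg(\mathbf{c}_\eta)=\sum_{\langle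 j_{p+1},k_{p+1}\rangle}\cdots\sum_{\langle j_1,k_1\rangle}\ \sum_{P\rhd(H^{\gamma_{p+1}}_{j_{p+1}k_{p+1}},\ldots,H^{\gamma_1}_{j_1k_1})}\frac12\left(\|P|\mathbf{c}_\eta\rangle\|+\|P^\dagger|\mathbf{c}_\eta\rangle\|\right),$$ with each $\sum_{\langle j_q,k_q\rangle}$ ranging over the pairs $(j_q,k_q)$ such that $\mu^{\gamma_q}_{j_q,k_q}\neq0$.
   Context: Fermionic Fock space on $n$ spin orbitals: the $2^n$-dimensional Hilbert space with orthonormal computational basis $|\mathbf{c}\rangle=|c_0,\dots,c_{n-1}\rangle$. Creation operators: $A_j^\dagger|\dots,0_j,\dots\rangle=(-1)^{\sum_{k<j}c_k}|\dots,1_j,\dots\rangle$, $A_j^\dagger|\dots,1_j,\dots\rangle=0$; annihilation operators $A_j=(A_j^\dagger)^\dagger$; $N_l=A_l^\dagger A_l$, $N=\sum_lN_l$. The $\eta$-electron subspace is spanned by $|\mathbf{c}\rangle$ with $\sum_jc_j=\eta$; $\eta$-electron states are unit vectors in it. For $X$ commuting with $N$, $\|X\|_\eta=\max|\langle\phi_\eta|X|\psi_\eta\rangle|$ over $\eta$-electron states. $\|\cdot\|_{\max}$ is the largest absolute value of a matrix entry. *)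

theory Defs
  imports Complex_Main
begin

text \<open>A computational basis vector |c> is
  represented by the set S of occupied orbitals (S \<subseteq> {..<n}). Operators are
  represented by their matrix entries X S T = <S|X|T>, vectors by their coefficients.\<close>

type_synonym fop = "nat set \<Rightarrow> nat set \<Rightarrow> complex"
type_synonym fvec = "nat set \<Rightarrow> complex"

definition cre :: "nat \<Rightarrow> nat \<Rightarrow> fop" where
  "cre n j = (\<lambda>S' S. if S \<subseteq> {..<n} \<and> j < n \<and> j \<notin> S \<and> S' = insert j S
                      then (-1) ^ card {k\<in>S. k < j} else 0)"

definition fadj :: "fop \<Rightarrow> fop" where
  "fadj X = (\<lambda>S T. cnj (X T S))"

definition ann :: "nat \<Rightarrow> nat \<Rightarrow> fop" where
  "ann n j = fadj (cre n j)"

definition mmul :: "nat \<Rightarrow> fop \<Rightarrow> fop \<Rightarrow> fop" where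
  "mmul n X Y = (\<lambda>S T. \<Sum>U\<in>Pow {..<n}. X S U * Y U T)"

definition idop :: fop where
  "idop = (\<lambda>S T. if S = T then 1 else 0)"

definition num :: "nat \<Rightarrow> nat \<Rightarrow> fop" where
  "num n l = mmul n (cre n l) (ann n l)"

definition comm :: "nat \<Rightarrow> fop \<Rightarrow> fop \<Rightarrow> fop" where
  "comm n X Y = (\<lambda>S T. mmul n X Y S T - mmul n Y X S T)"

definition Top :: "nat \<Rightarrow> (nat \<Rightarrow> nat \<Rightarrow> complex) \<Rightarrow> fop" where
  "Top n \<tau> = (\<lambda>S T. \<Sum>j<n. \<Sum>k<n. \<tau> j k * mmul n (cre n j) (ann n k) S T)"

definition Vop :: "nat \<Rightarrow> (nat \<Rightarrow> nat \<Rightarrow> complex) \<Rightarrow> fop" where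
  "Vop n \<nu> = (\<lambda>S T. \<Sum>l<n. \<Sum>m<n. \<nu> l m * mmul n (num n l) (num n m) S T)"

text \<open>gamma = True stands for 1 (kinetic part T), False for 0 (potential part V).\<close>
definition Hgam :: "nat \<Rightarrow> (nat \<Rightarrow> nat \<Rightarrow> complex) \<Rightarrow> (nat \<Rightarrow> nat \<Rightarrow> complex) \<Rightarrow> bool \<Rightarrow> fop" where
  "Hgam n \<tau> \<nu> g = (if g then Top n \<tau> else Vop n \<nu>)"

definition mu :: "(nat \<Rightarrow> nat \<Rightarrow> complex) \<Rightarrow> (nat \<Rightarrow> nat \<Rightarrow> complex) \<Rightarrow> bool \<Rightarrow> nat \<Rightarrow> nat \<Rightarrow> complex" where
  "mu \<tau> \<nu> g = (if g then \<tau> else \<nu>)"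

definition Hjk :: "nat \<Rightarrow> bool \<Rightarrow> nat \<times> nat \<Rightarrow> fop" where
  "Hjk n g jk = (if g then mmul n (cre n (fst jk)) (ann n (snd jk))
                 else mmul n (num n (fst jk)) (num n (snd jk)))"

fun nest :: "nat \<Rightarrow> fop list \<Rightarrow> fop" where
  "nest n [] = (\<lambda>S T. 0)"
| "nest n [X] = X"
| "nest n (X # Y # Xs) = comm n X (nest n (Y # Xs))"

text \<open>Fermionic paths: (-1)^a Y_1 ... Y_r with Y_i among A_j^dag, A_k, N_l.\<close>
datatype letter = Cr nat | An nat | Nm nat

type_synonym fpath = "bool \<times> letter list"

fun letter_op :: "nat \<Rightarrow> letter \<Rightarrow> fop" where
  "letter_op n (Cr j) = cre n j"
| "letter_op n (An k) = ann n k"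
| "letter_op n (Nm l) = num n l"

definition path_op :: "nat \<Rightarrow> fpath \<Rightarrow> fop" where
  "path_op n P = (\<lambda>S T. (if fst P then -1 else 1) *
                   foldr (mmul n) (map (letter_op n) (snd P)) idop S T)"

definition opvec :: "nat \<Rightarrow> fop \<Rightarrow> fvec \<Rightarrow> fvec" where
  "opvec n X \<psi> = (\<lambda>S. \<Sum>T\<in>Pow {..<n}. X S T * \<psi> T)"

definition vnorm :: "nat \<Rightarrow> fvec \<Rightarrow> real" where
  "vnorm n \<psi> = sqrt (\<Sum>S\<in>Pow {..<n}. (cmod (\<psi> S))\<^sup>2)"

definition basis :: "nat set \<Rightarrow> fvec" where
  "basis c = (\<lambda>S. if S = c then 1 else 0)"

definition inner_f :: "nat \<Rightarrow> fvec \<Rightarrow> fvec \<Rightarrow> complex" where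
  "inner_f n \<phi> \<psi> = (\<Sum>S\<in>Pow {..<n}. cnj (\<phi> S) * \<psi> S)"

definition eta_states :: "nat \<Rightarrow> nat \<Rightarrow> fvec set" where
  "eta_states n \<eta> = {\<psi>. (\<forall>S. \<psi> S \<noteq> 0 \<longrightarrow> S \<subseteq> {..<n} \<and> card S = \<eta>) \<and> vnorm n \<psi> = 1}"

definition eta_norm :: "nat \<Rightarrow> nat \<Rightarrow> fop \<Rightarrow> real" where
  "eta_norm n \<eta> X = Sup {cmod (inner_f n \<phi> (opvec n X \<psi>)) | \<phi> \<psi>.
                          \<phi> \<in> eta_states n \<eta> \<and> \<psi> \<in> eta_states n \<eta>}"

definition maxnorm :: "nat \<Rightarrow> (nat \<Rightarrow> nat \<Rightarrow> complex) \<Rightarrow> real" where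
  "maxnorm n M = Max {cmod (M j k) | j k. j < n \<and> k < n}"

definition valid_idx :: "nat \<Rightarrow> bool list \<Rightarrow> (nat \<times> nat) list \<Rightarrow> bool" where
  "valid_idx n gs js = (length js = length gs \<and> (\<forall>jk\<in>set js. fst jk < n \<and> snd jk < n))"

text \<open>gs = [gamma_1, ..., gamma_{p+1}], js = [(j_1,k_1), ..., (j_{p+1},k_{p+1})];
  the nested commutator [H_{p+1}, ... [H_2, H_1]] is nest applied to the reversed list.\<close>
definition deg :: "nat \<Rightarrow> (nat \<Rightarrow> nat \<Rightarrow> complex) \<Rightarrow> (nat \<Rightarrow> nat \<Rightarrow> complex) \<Rightarrow> bool list
                   \<Rightarrow> ((nat \<times> nat) list \<Rightarrow> fpath list) \<Rightarrow> nat set \<Rightarrow> real" where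
  "deg n \<tau> \<nu> gs E c =
     (\<Sum>js \<in> {js. valid_idx n gs js \<and>
                 (\<forall>q<length gs. mu \<tau> \<nu> (gs ! q) (fst (js ! q)) (snd (js ! q)) \<noteq> 0)}.
        (\<Sum>P\<leftarrow>E js. (vnorm n (opvec n (path_op n P) (basis c))
                       + vnorm n (opvec n (fadj (path_op n P)) (basis c))) / 2))"

end

theory Submission
  imports Defs
begin


lemma fadj_mmul: "fadj (mmul n X Y) = mmul n (fadj Y) (fadj X)"
  unfolding fadj_def mmul_def by (auto simp: mult.commute intro!: ext)

lemma fadj_comm: "fadj (comm n X Y) = (\<lambda>S T. - comm n (fadj X) (fadj Y) S T)"
  unfolding comm_def by (auto simp: fadj_mmul[symmetric] intro!: ext) (simp add: fadj_def)

lemma comm_neg_right: "comm n X (\<lambda>S T. - Y S T) = (\<lambda>S T. - comm n X Y S T)"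
  unfolding comm_def mmul_def by (auto simp: sum_negf intro!: ext)

lemma nest_herm:
  assumes "\<forall>X\<in>set L. fadj X = X"
  shows "fadj (nest n L) = nest n L \<or> fadj (nest n L) = (\<lambda>S T. - nest n L S T)"
using assms proof (induction n L rule: nest.induct)
  case (1 n) show ?case by (simp add: fadj_def)
next
  case (2 n X) thus ?case by simp
next
  case (3 n X Y Xs)
  then have hX: "fadj X = X" by simp
  from 3 have "fadj (nest n (Y#Xs)) = nest n (Y#Xs) \<or> fadj (nest n (Y#Xs)) = (\<lambda>S T. - nest n (Y#Xs) S T)" by simp
  then show ?case
  proof
    assume h: "fadj (nest n (Y # Xs)) = nest n (Y # Xs)"
    have "fadj (nest n (X#Y#Xs)) = (\<lambda>S T. - nest n (X#Y#Xs) S T)" using h hX by (simp add: fadj_comm)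
    then show ?thesis by blast
  next
    assume h: "fadj (nest n (Y # Xs)) = (\<lambda>S T. - nest n (Y # Xs) S T)"
    have "fadj (nest n (X#Y#Xs)) = nest n (X#Y#Xs)" using h hX by (simp add: fadj_comm comm_neg_right)
    then show ?thesis by blast
  qed
qed

lemma mmul_sum:
  assumes "finite A" "finite B"
  shows "mmul n (\<lambda>S T. \<Sum>a\<in>A. c a * F a S T) (\<lambda>S T. \<Sum>b\<in>B. d b * G b S T) S T
       = (\<Sum>a\<in>A. \<Sum>b\<in>B. c a * d b * mmul n (F a) (G b) S T)"
proof -
  have "mmul n (\<lambda>S T. \<Sum>a\<in>A. c a * F a S T) (\<lambda>S T. \<Sum>b\<in>B. d b * G b S T) S T
     = (\<Sum>U\<in>Pow {..<n}. \<Sum>a\<in>A. \<Sum>b\<in>B. c a * d b * (F a S U * G b U T))"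
    unfolding mmul_def by (simp add: sum_product mult_ac)
  also have "\<dots> = (\<Sum>a\<in>A. \<Sum>U\<in>Pow {..<n}. \<Sum>b\<in>B. c a * d b * (F a S U * G b U T))"
    by (rule sum.swap)
  also have "\<dots> = (\<Sum>a\<in>A. \<Sum>b\<in>B. \<Sum>U\<in>Pow {..<n}. c a * d b * (F a S U * G b U T))"
    by (rule sum.cong[OF refl], rule sum.swap)
  also have "\<dots> = (\<Sum>a\<in>A. \<Sum>b\<in>B. c a * d b * mmul n (F a) (G b) S T)"
    unfolding mmul_def by (simp add: sum_distrib_left)
  finally show ?thesis .
qed

lemma comm_sum:
  assumes "finite A" "finite B"
  shows "comm n (\<lambda>S T. \<Sum>a\<in>A. c a * F a S T) (\<lambda>S T. \<Sum>b\<in>B. d b * G b S T) S T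
       = (\<Sum>a\<in>A. \<Sum>b\<in>B. c a * d b * comm n (F a) (G b) S T)"
proof -
  have "mmul n (\<lambda>S T. \<Sum>b\<in>B. d b * G b S T) (\<lambda>S T. \<Sum>a\<in>A. c a * F a S T) S T
     = (\<Sum>b\<in>B. \<Sum>a\<in>A. d b * c a * mmul n (G b) (F a) S T)" by (rule mmul_sum[OF assms(2,1)])
  also have "\<dots> = (\<Sum>a\<in>A. \<Sum>b\<in>B. c a * d b * mmul n (G b) (F a) S T)"
    by (subst sum.swap) (simp add: mult_ac)
  finally have h: "mmul n (\<lambda>S T. \<Sum>b\<in>B. d b * G b S T) (\<lambda>S T. \<Sum>a\<in>A. c a * F a S T) S T
     = (\<Sum>a\<in>A. \<Sum>b\<in>B. c a * d b * mmul n (G b) (F a) S T)" .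
  show ?thesis unfolding comm_def
    by (simp add: mmul_sum[OF assms] h sum_subtractf[symmetric] right_diff_distrib)
qed

definition idxl :: "nat \<Rightarrow> nat \<Rightarrow> (nat \<times> nat) list set" where
  "idxl n m = {xs. set xs \<subseteq> {..<n} \<times> {..<n} \<and> length xs = m}"

definition coef :: "(nat \<Rightarrow> nat \<Rightarrow> complex) \<Rightarrow> (nat \<Rightarrow> nat \<Rightarrow> complex) \<Rightarrow> bool list \<Rightarrow> (nat \<times> nat) list \<Rightarrow> complex" where
  "coef \<tau> \<nu> gl js = prod_list (map2 (\<lambda>g jk. mu \<tau> \<nu> g (fst jk) (snd jk)) gl js)"

lemma finite_idxl: "finite (idxl n m)"
  unfolding idxl_def by (rule finite_lists_length_eq) simp

lemma sum_idxl_Suc: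
  "(\<Sum>js\<in>idxl n (Suc m). f js) = (\<Sum>jk\<in>{..<n}\<times>{..<n}. \<Sum>js\<in>idxl n m. f (jk#js))"
proof -
  have "(\<Sum>js\<in>idxl n (Suc m). f js) = (\<Sum>p\<in>idxl n m \<times> ({..<n}\<times>{..<n}). f (snd p # fst p))"
    unfolding idxl_def lists_length_Suc_eq
    by (subst sum.reindex) (auto simp: inj_on_def case_prod_beta)
  also have "\<dots> = (\<Sum>js\<in>idxl n m. \<Sum>jk\<in>{..<n}\<times>{..<n}. f (jk#js))"
    by (simp add: sum.cartesian_product case_prod_beta)
  also have "\<dots> = (\<Sum>jk\<in>{..<n}\<times>{..<n}. \<Sum>js\<in>idxl n m. f (jk#js))"
    by (rule sum.swap)
  finally show ?thesis .
qed

lemma idxl_0: "idxl n 0 = {[]}" unfolding idxl_def by auto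

lemma Hgam_expand:
  "Hgam n \<tau> \<nu> g = (\<lambda>S T. \<Sum>jk\<in>{..<n}\<times>{..<n}. mu \<tau> \<nu> g (fst jk) (snd jk) * Hjk n g jk S T)"
  unfolding Hgam_def Top_def Vop_def mu_def Hjk_def
  by (cases g) (auto intro!: ext simp: sum.cartesian_product case_prod_beta)

lemma nest_Cons: "nest n (X # Xs) = (if Xs = [] then X else comm n X (nest n Xs))"
  by (cases Xs) auto

lemma nest_multi:
  "nest n (map (Hgam n \<tau> \<nu>) gl) S T
     = (\<Sum>js\<in>idxl n (length gl). coef \<tau> \<nu> gl js * nest n (map2 (Hjk n) gl js) S T)"
proof (induction gl arbitrary: S T)
  case Nil
  show ?case by (simp add: idxl_0)
next
  case (Cons g gl)
  show ?case
  proof (cases "gl = []")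
    case True
    then show ?thesis
      by (simp add: sum_idxl_Suc Hgam_expand coef_def idxl_0)
  next
    case False
    have IH: "nest n (map (Hgam n \<tau> \<nu>) gl) = (\<lambda>S T. \<Sum>js\<in>idxl n (length gl). coef \<tau> \<nu> gl js * nest n (map2 (Hjk n) gl js) S T)"
      using Cons.IH by (intro ext) 
    have "nest n (map (Hgam n \<tau> \<nu>) (g # gl)) S T = comm n (Hgam n \<tau> \<nu> g) (nest n (map (Hgam n \<tau> \<nu>) gl)) S T"
      using False by (simp add: nest_Cons)
    also have "\<dots> = (\<Sum>jk\<in>{..<n}\<times>{..<n}. \<Sum>js\<in>idxl n (length gl). mu \<tau> \<nu> g (fst jk) (snd jk) * coef \<tau> \<nu> gl js * comm n (Hjk n g jk) (nest n (map2 (Hjk n) gl js)) S T)"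
      unfolding IH Hgam_expand by (rule comm_sum) (auto simp: finite_idxl)
    also have "\<dots> = (\<Sum>js\<in>idxl n (length (g#gl)). coef \<tau> \<nu> (g#gl) js * nest n (map2 (Hjk n) (g#gl) js) S T)"
      unfolding length_Cons sum_idxl_Suc
    proof (intro sum.cong refl)
      fix jk js assume "js \<in> idxl n (length gl)"
      then have "map2 (Hjk n) gl js \<noteq> []" using False by (auto simp: idxl_def)
      then show "mu \<tau> \<nu> g (fst jk) (snd jk) * coef \<tau> \<nu> gl js * comm n (Hjk n g jk) (nest n (map2 (Hjk n) gl js)) S T
         = coef \<tau> \<nu> (g#gl) (jk#js) * nest n (map2 (Hjk n) (g#gl) (jk#js)) S T"
        by (simp add: coef_def nest_Cons)
    qed
    finally show ?thesis .
  qed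
qed



definition colmono :: "nat \<Rightarrow> fop \<Rightarrow> bool" where
 "colmono n M = (\<forall>T S1 S2. S1 \<in> Pow {..<n} \<longrightarrow> S2 \<in> Pow {..<n} \<longrightarrow> M S1 T \<noteq> 0 \<longrightarrow> M S2 T \<noteq> 0 \<longrightarrow> S1 = S2)"
definition rowmono :: "nat \<Rightarrow> fop \<Rightarrow> bool" where
 "rowmono n M = (\<forall>S T1 T2. T1 \<in> Pow {..<n} \<longrightarrow> T2 \<in> Pow {..<n} \<longrightarrow> M S T1 \<noteq> 0 \<longrightarrow> M S T2 \<noteq> 0 \<longrightarrow> T1 = T2)"

lemma mmul_nz: assumes "mmul n X Y S T \<noteq> 0" obtains U where "U \<in> Pow {..<n}" "X S U \<noteq> 0" "Y U T \<noteq> 0"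
proof -
  from assms obtain U where "U \<in> Pow {..<n}" "X S U * Y U T \<noteq> 0" unfolding mmul_def
    by (meson sum.neutral)
  then show ?thesis using that by auto
qed

lemma colmono_mmul: "colmono n X \<Longrightarrow> colmono n Y \<Longrightarrow> colmono n (mmul n X Y)"
  unfolding colmono_def by (metis mmul_nz)

lemma rowmono_mmul: "rowmono n X \<Longrightarrow> rowmono n Y \<Longrightarrow> rowmono n (mmul n X Y)"
  unfolding rowmono_def by (metis mmul_nz)

lemma colmono_fadj: "colmono n (fadj X) = rowmono n X"
  unfolding colmono_def rowmono_def fadj_def by simp
lemma rowmono_fadj: "rowmono n (fadj X) = colmono n X"
  unfolding colmono_def rowmono_def fadj_def by simp

lemma cre_mono: "colmono n (cre n j) \<and> rowmono n (cre n j)"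
  unfolding colmono_def rowmono_def cre_def
  by (auto split: if_splits)

lemma ann_mono: "colmono n (ann n j) \<and> rowmono n (ann n j)"
  unfolding ann_def using cre_mono colmono_fadj rowmono_fadj by blast

lemma num_mono: "colmono n (num n j) \<and> rowmono n (num n j)"
  unfolding num_def using cre_mono ann_mono colmono_mmul rowmono_mmul by blast

lemma idop_mono: "colmono n idop \<and> rowmono n idop"
  unfolding colmono_def rowmono_def idop_def by (auto split: if_splits)

lemma letter_mono: "colmono n (letter_op n x) \<and> rowmono n (letter_op n x)"
  by (cases x) (auto simp: cre_mono ann_mono num_mono)

lemma foldr_mono: "colmono n (foldr (mmul n) (map (letter_op n) xs) idop) \<and> rowmono n (foldr (mmul n) (map (letter_op n) xs) idop)"
  by (induction xs) (auto simp: idop_mono letter_mono colmono_mmul rowmono_mmul)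

lemma path_mono: "colmono n (path_op n P) \<and> rowmono n (path_op n P)"
  using foldr_mono[of n "snd P"] unfolding path_op_def colmono_def rowmono_def
  by (auto simp: split: if_splits)

lemma sqrt_sum_single:
  assumes "finite A" "\<forall>x\<in>A. \<forall>y\<in>A. g x \<noteq> 0 \<longrightarrow> g y \<noteq> 0 \<longrightarrow> x = y"
  shows "sqrt (\<Sum>x\<in>A. (cmod (g x))\<^sup>2) = (\<Sum>x\<in>A. cmod (g x))"
proof (cases "\<exists>x\<in>A. g x \<noteq> 0")
  case True
  then obtain x0 where x0: "x0 \<in> A" "g x0 \<noteq> 0" by blast
  have z: "\<forall>y\<in>A - {x0}. g y = 0" using assms(2) x0 by blast
  have "(\<Sum>x\<in>A. (cmod (g x))\<^sup>2) = (cmod (g x0))\<^sup>2"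
    using z by (subst sum.remove[OF assms(1) x0(1)]) (simp add: sum.neutral)
  moreover have "(\<Sum>x\<in>A. cmod (g x)) = cmod (g x0)"
    using z by (subst sum.remove[OF assms(1) x0(1)]) (simp add: sum.neutral)
  ultimately show ?thesis by simp
next
  case False then show ?thesis by simp
qed

lemma vnorm_col:
  assumes "T \<in> Pow {..<n}" "colmono n M"
  shows "vnorm n (opvec n M (basis T)) = (\<Sum>S\<in>Pow {..<n}. cmod (M S T))"
proof -
  have "opvec n M (basis T) = (\<lambda>S. M S T)"
    unfolding opvec_def basis_def using assms(1)
    by (auto intro!: ext simp: if_distrib cong: if_cong)
  then have "vnorm n (opvec n M (basis T)) = sqrt (\<Sum>S\<in>Pow {..<n}. (cmod (M S T))\<^sup>2)"
    unfolding vnorm_def by simp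
  also have "\<dots> = (\<Sum>S\<in>Pow {..<n}. cmod (M S T))"
    using assms(2) unfolding colmono_def by (intro sqrt_sum_single) auto
  finally show ?thesis .
qed

lemma vnorm_row:
  assumes "S \<in> Pow {..<n}" "rowmono n M"
  shows "vnorm n (opvec n (fadj M) (basis S)) = (\<Sum>T\<in>Pow {..<n}. cmod (M S T))"
proof -
  have "vnorm n (opvec n (fadj M) (basis S)) = (\<Sum>T\<in>Pow {..<n}. cmod (fadj M T S))"
    using vnorm_col[of S n "fadj M"] assms by (simp add: colmono_fadj)
  then show ?thesis by (simp add: fadj_def)
qed



lemma maxnorm_ge: "j < n \<Longrightarrow> k < n \<Longrightarrow> cmod (M j k) \<le> maxnorm n M"
proof -
  assume jk: "j < n" "k < n"
  have "{cmod (M j k) |j k. j < n \<and> k < n} = (\<lambda>p. cmod (M (fst p) (snd p))) ` ({..<n}\<times>{..<n})"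
    by force
  then have "finite {cmod (M j k) |j k. j < n \<and> k < n}" by simp
  then show ?thesis unfolding maxnorm_def using jk by (intro Max_ge) auto
qed

lemma maxnorm_nonneg: "0 < n \<Longrightarrow> 0 \<le> maxnorm n M"
  using maxnorm_ge[of 0 n 0 M] by (meson norm_ge_zero order_trans)

lemma coef_bound:
  assumes "0 < n"
  shows "length js = length gs \<Longrightarrow> \<forall>jk\<in>set js. fst jk < n \<and> snd jk < n \<Longrightarrow>
    cmod (coef \<tau> \<nu> gs js) \<le> prod_list (map (\<lambda>g. if g then maxnorm n \<tau> else maxnorm n \<nu>) gs)"
proof (induction gs arbitrary: js)
  case Nil then show ?case by (simp add: coef_def)
next
  case (Cons g gs)
  then obtain jk js' where js: "js = jk # js'" by (cases js) auto
  have c: "coef \<tau> \<nu> (g#gs) js = mu \<tau> \<nu> g (fst jk) (snd jk) * coef \<tau> \<nu> gs js'"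
    unfolding js coef_def by simp
  have h1: "cmod (mu \<tau> \<nu> g (fst jk) (snd jk)) \<le> (if g then maxnorm n \<tau> else maxnorm n \<nu>)"
    using Cons.prems js by (auto simp: mu_def intro: maxnorm_ge)
  have h2: "cmod (coef \<tau> \<nu> gs js') \<le> prod_list (map (\<lambda>g. if g then maxnorm n \<tau> else maxnorm n \<nu>) gs)"
    using Cons js by auto
  have "0 \<le> (if g then maxnorm n \<tau> else maxnorm n \<nu>)" using maxnorm_nonneg[OF assms] by simp
  then show ?case unfolding c norm_mult using h1 h2
    by (simp add: mult_mono)
qed

lemma prod_if:
  fixes a b :: real
  shows "prod_list (map (\<lambda>g. if g then a else b) gs) = a ^ length (filter id gs) * b ^ (length gs - length (filter id gs))"
proof (induction gs)
  case Nil then show ?case by simp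
next
  case (Cons g gs)
  have "length (filter id gs) \<le> length gs" by (rule length_filter_le)
  then show ?case using Cons by (cases g) (auto simp: Suc_diff_le mult_ac)
qed

lemma norm_sum_list: "cmod (\<Sum>x\<leftarrow>xs. f x) \<le> (\<Sum>x\<leftarrow>xs. cmod (f x))"
  by (induction xs) (auto intro: order_trans[OF norm_triangle_ineq])

lemma sum_sum_list_swap: "(\<Sum>T\<in>A. \<Sum>x\<leftarrow>xs. f T x) = (\<Sum>x\<leftarrow>xs. \<Sum>T\<in>A. f T x)"
  by (induction xs) (auto simp: sum.distrib)

lemma sum_list_half: "(\<Sum>x\<leftarrow>xs. ((f x + g x) / 2 :: real)) = ((\<Sum>x\<leftarrow>xs. f x) + (\<Sum>x\<leftarrow>xs. g x)) / 2"
  by (induction xs) (auto simp: field_simps)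

lemma schur:
  fixes X :: fop and K :: "nat set \<Rightarrow> nat set \<Rightarrow> real" and B D :: real
  assumes XK: "\<forall>S T. cmod (X S T) \<le> B * K S T" and K0: "\<forall>S T. 0 \<le> K S T" and B0: "0 \<le> B"
   and r: "\<forall>S\<in>Pow {..<n}. \<phi> S \<noteq> 0 \<longrightarrow> (\<Sum>T\<in>Pow {..<n}. K S T) \<le> D"
   and c: "\<forall>T\<in>Pow {..<n}. \<psi> T \<noteq> 0 \<longrightarrow> (\<Sum>S\<in>Pow {..<n}. K S T) \<le> D"
   and n1: "(\<Sum>S\<in>Pow {..<n}. (cmod (\<phi> S))\<^sup>2) = 1" and n2: "(\<Sum>S\<in>Pow {..<n}. (cmod (\<psi> S))\<^sup>2) = 1"
  shows "cmod (inner_f n \<phi> (opvec n X \<psi>)) \<le> B * D"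
proof -
  let ?P = "Pow {..<n}"
  define u where "u S = cmod (\<phi> S)" for S
  define v where "v S = cmod (\<psi> S)" for S
  have "cmod (inner_f n \<phi> (opvec n X \<psi>)) \<le> (\<Sum>S\<in>?P. cmod (cnj (\<phi> S) * (\<Sum>T\<in>?P. X S T * \<psi> T)))"
    unfolding inner_f_def opvec_def by (rule norm_sum)
  also have "\<dots> \<le> (\<Sum>S\<in>?P. \<Sum>T\<in>?P. u S * (B * K S T) * v T)"
  proof (rule sum_mono)
    fix S
    have "cmod (cnj (\<phi> S) * (\<Sum>T\<in>?P. X S T * \<psi> T)) \<le> u S * (\<Sum>T\<in>?P. cmod (X S T * \<psi> T))"
    proof -
      have "cmod (\<Sum>T\<in>?P. X S T * \<psi> T) \<le> (\<Sum>T\<in>?P. cmod (X S T * \<psi> T))" by (rule norm_sum)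
      then show ?thesis unfolding norm_mult u_def by (simp add: mult_left_mono)
    qed
    also have "\<dots> \<le> u S * (\<Sum>T\<in>?P. B * K S T * v T)"
      unfolding norm_mult v_def u_def
      by (intro mult_left_mono sum_mono) (auto intro: mult_right_mono XK[rule_format])
    finally show "cmod (cnj (\<phi> S) * (\<Sum>T\<in>?P. X S T * \<psi> T)) \<le> (\<Sum>T\<in>?P. u S * (B * K S T) * v T)"
      by (simp add: sum_distrib_left mult_ac)
  qed
  also have "\<dots> \<le> (\<Sum>S\<in>?P. \<Sum>T\<in>?P. B * K S T * (((u S)\<^sup>2 + (v T)\<^sup>2) / 2))"
  proof (intro sum_mono)
    fix S T
    have "u S * v T \<le> ((u S)\<^sup>2 + (v T)\<^sup>2) / 2" using sum_squares_bound[of "u S" "v T"] by simp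
    then have "B * K S T * (u S * v T) \<le> B * K S T * (((u S)\<^sup>2 + (v T)\<^sup>2) / 2)"
      using B0 K0 by (intro mult_left_mono) auto
    then show "u S * (B * K S T) * v T \<le> B * K S T * (((u S)\<^sup>2 + (v T)\<^sup>2) / 2)" by (simp add: mult_ac)
  qed
  also have "\<dots> = B / 2 * (\<Sum>S\<in>?P. (u S)\<^sup>2 * (\<Sum>T\<in>?P. K S T)) + B / 2 * (\<Sum>S\<in>?P. \<Sum>T\<in>?P. K S T * (v T)\<^sup>2)"
  proof -
    have "(\<Sum>S\<in>?P. \<Sum>T\<in>?P. B * K S T * (((u S)\<^sup>2 + (v T)\<^sup>2) / 2))
       = (\<Sum>S\<in>?P. \<Sum>T\<in>?P. (B / 2 * ((u S)\<^sup>2 * K S T) + B / 2 * (K S T * (v T)\<^sup>2)))"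
      by (intro sum.cong refl) (simp add: field_simps)
    also have "\<dots> = B / 2 * (\<Sum>S\<in>?P. (u S)\<^sup>2 * (\<Sum>T\<in>?P. K S T)) + B / 2 * (\<Sum>S\<in>?P. \<Sum>T\<in>?P. K S T * (v T)\<^sup>2)"
      by (simp add: sum.distrib sum_distrib_left)
    finally show ?thesis .
  qed
  also have "(\<Sum>S\<in>?P. \<Sum>T\<in>?P. K S T * (v T)\<^sup>2) = (\<Sum>T\<in>?P. (v T)\<^sup>2 * (\<Sum>S\<in>?P. K S T))"
    by (subst sum.swap) (simp add: sum_distrib_left mult_ac)
  also have "B / 2 * (\<Sum>S\<in>?P. (u S)\<^sup>2 * (\<Sum>T\<in>?P. K S T)) + B / 2 * (\<Sum>T\<in>?P. (v T)\<^sup>2 * (\<Sum>S\<in>?P. K S T))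
     \<le> B / 2 * (\<Sum>S\<in>?P. (u S)\<^sup>2 * D) + B / 2 * (\<Sum>T\<in>?P. (v T)\<^sup>2 * D)"
  proof -
    have a: "(\<Sum>S\<in>?P. (u S)\<^sup>2 * (\<Sum>T\<in>?P. K S T)) \<le> (\<Sum>S\<in>?P. (u S)\<^sup>2 * D)"
    proof (rule sum_mono)
      fix S assume "S \<in> ?P"
      then show "(u S)\<^sup>2 * (\<Sum>T\<in>?P. K S T) \<le> (u S)\<^sup>2 * D"
        using r unfolding u_def by (cases "\<phi> S = 0") (auto intro: mult_left_mono)
    qed
    have b: "(\<Sum>T\<in>?P. (v T)\<^sup>2 * (\<Sum>S\<in>?P. K S T)) \<le> (\<Sum>T\<in>?P. (v T)\<^sup>2 * D)"
    proof (rule sum_mono)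
      fix T assume "T \<in> ?P"
      then show "(v T)\<^sup>2 * (\<Sum>S\<in>?P. K S T) \<le> (v T)\<^sup>2 * D"
        using c unfolding v_def by (cases "\<psi> T = 0") (auto intro: mult_left_mono)
    qed
    show ?thesis using a b B0 by (intro add_mono mult_left_mono) auto
  qed
  also have "\<dots> = B * D"
  proof -
    have "(\<Sum>S\<in>?P. (u S)\<^sup>2 * D) = D" "(\<Sum>T\<in>?P. (v T)\<^sup>2 * D) = D"
      using n1 n2 unfolding u_def v_def by (simp_all add: sum_distrib_right[symmetric])
    then show ?thesis by simp
  qed
  finally show ?thesis .
qed



theorem proposition11:
  fixes n \<eta> :: nat and \<tau> \<nu> :: "nat \<Rightarrow> nat \<Rightarrow> complex" and gs :: "bool list"
    and E :: "(nat \<times> nat) list \<Rightarrow> fpath list"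
  assumes "0 < n" and "\<eta> \<le> n" and "gs \<noteq> []"
    and "fadj (Top n \<tau>) = Top n \<tau>" and "fadj (Vop n \<nu>) = Vop n \<nu>"
    and "\<forall>js. valid_idx n gs js \<longrightarrow>
           (\<lambda>S T. \<Sum>P\<leftarrow>E js. path_op n P S T) = nest n (rev (map2 (Hjk n) gs js))"
    and "\<forall>js. valid_idx n gs js \<longrightarrow> nest n (rev (map2 (Hjk n) gs js)) = (\<lambda>S T. 0) \<longrightarrow> E js = []"
  shows "eta_norm n \<eta> (nest n (rev (map (Hgam n \<tau> \<nu>) gs)))
         \<le> maxnorm n \<tau> ^ length (filter id gs) * maxnorm n \<nu> ^ (length gs - length (filter id gs))
           * Max {deg n \<tau> \<nu> gs E c | c. c \<subseteq> {..<n} \<and> card c = \<eta>}"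
proof -
  let ?P = "Pow {..<n}"
  let ?X = "nest n (rev (map (Hgam n \<tau> \<nu>) gs))"
  define J where "J = {js. valid_idx n gs js \<and>
                 (\<forall>q<length gs. mu \<tau> \<nu> (gs ! q) (fst (js ! q)) (snd (js ! q)) \<noteq> 0)}"
  define B where "B = maxnorm n \<tau> ^ length (filter id gs) * maxnorm n \<nu> ^ (length gs - length (filter id gs))"
  define A where "A S T = (\<Sum>js\<in>J. \<Sum>P\<leftarrow>E js. cmod (path_op n P S T))" for S T
  define K where "K S T = (A S T + A T S) / 2" for S T
  define D where "D = Max {deg n \<tau> \<nu> gs E c | c. c \<subseteq> {..<n} \<and> card c = \<eta>}"
  have valid_iff: "\<And>js. valid_idx n gs js \<longleftrightarrow> js \<in> idxl n (length gs)"
    unfolding valid_idx_def idxl_def by auto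
  have finJ: "finite J"
    by (rule finite_subset[OF _ finite_idxl[of n "length gs"]]) (auto simp: J_def valid_iff)
  have B0: "0 \<le> B" unfolding B_def using maxnorm_nonneg[OF assms(1)] by simp
  have coefB: "cmod (coef \<tau> \<nu> gs js) \<le> B" if "js \<in> J" for js
    unfolding B_def prod_if[symmetric] using that
    by (intro coef_bound[OF assms(1)]) (auto simp: J_def valid_idx_def)
  have expand: "?X S T = (\<Sum>js\<in>J. coef \<tau> \<nu> gs js * (\<Sum>P\<leftarrow>E js. path_op n P S T))" for S T
  proof -
    have "?X S T = nest n (map (Hgam n \<tau> \<nu>) (rev gs)) S T" by (simp add: rev_map)
    also have "\<dots> = (\<Sum>js\<in>idxl n (length gs). coef \<tau> \<nu> (rev gs) js * nest n (map2 (Hjk n) (rev gs) js) S T)"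
      using nest_multi[of n \<tau> \<nu> "rev gs" S T] by simp
    also have "\<dots> = (\<Sum>js\<in>idxl n (length gs). coef \<tau> \<nu> (rev gs) (rev js) * nest n (map2 (Hjk n) (rev gs) (rev js)) S T)"
      by (rule sum.reindex_bij_witness[of _ rev rev]) (auto simp: idxl_def)
    also have "\<dots> = (\<Sum>js\<in>idxl n (length gs). coef \<tau> \<nu> gs js * nest n (rev (map2 (Hjk n) gs js)) S T)"
      by (intro sum.cong refl) (auto simp: idxl_def coef_def zip_rev rev_map[symmetric])
    also have "\<dots> = (\<Sum>js\<in>idxl n (length gs). coef \<tau> \<nu> gs js * (\<Sum>P\<leftarrow>E js. path_op n P S T))"
    proof (intro sum.cong refl)
      fix js assume "js \<in> idxl n (length gs)"
      then have "valid_idx n gs js" using valid_iff by simp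
      then have eq: "(\<lambda>S T. \<Sum>P\<leftarrow>E js. path_op n P S T) = nest n (rev (map2 (Hjk n) gs js))"
        using assms(6) by blast
      show "coef \<tau> \<nu> gs js * nest n (rev (map2 (Hjk n) gs js)) S T
          = coef \<tau> \<nu> gs js * (\<Sum>P\<leftarrow>E js. path_op n P S T)"
        using eq[THEN fun_cong, THEN fun_cong, of S T] by simp
    qed
    also have "\<dots> = (\<Sum>js\<in>J. coef \<tau> \<nu> gs js * (\<Sum>P\<leftarrow>E js. path_op n P S T))"
    proof (rule sum.mono_neutral_right[OF finite_idxl])
      show "J \<subseteq> idxl n (length gs)" by (auto simp: J_def valid_iff)
    next
      show "\<forall>js\<in>idxl n (length gs) - J. coef \<tau> \<nu> gs js * (\<Sum>P\<leftarrow>E js. path_op n P S T) = 0"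
      proof
        fix js assume js: "js \<in> idxl n (length gs) - J"
        then obtain q where q: "q < length gs" "mu \<tau> \<nu> (gs ! q) (fst (js ! q)) (snd (js ! q)) = 0"
          by (auto simp: J_def valid_iff)
        have len: "length js = length gs" using js by (auto simp: idxl_def)
        have z: "(map2 (\<lambda>g jk. mu \<tau> \<nu> g (fst jk) (snd jk)) gs js) ! q = 0"
          using q len by simp
        have qq: "q < length (map2 (\<lambda>g jk. mu \<tau> \<nu> g (fst jk) (snd jk)) gs js)"
          using q len by simp
        have "0 \<in> set (map2 (\<lambda>g jk. mu \<tau> \<nu> g (fst jk) (snd jk)) gs js)"
          using nth_mem[OF qq] unfolding z .
        then have "coef \<tau> \<nu> gs js = 0" unfolding coef_def by (simp add: prod_list_zero_iff)
        then show "coef \<tau> \<nu> gs js * (\<Sum>P\<leftarrow>E js. path_op n P S T) = 0" by simp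
      qed
    qed
    finally show ?thesis .
  qed
  have maj: "cmod (?X S T) \<le> B * A S T" for S T
  proof -
    have "cmod (?X S T) \<le> (\<Sum>js\<in>J. cmod (coef \<tau> \<nu> gs js * (\<Sum>P\<leftarrow>E js. path_op n P S T)))"
      unfolding expand by (rule norm_sum)
    also have "\<dots> \<le> (\<Sum>js\<in>J. B * (\<Sum>P\<leftarrow>E js. cmod (path_op n P S T)))"
    proof (rule sum_mono)
      fix js assume "js \<in> J"
      then show "cmod (coef \<tau> \<nu> gs js * (\<Sum>P\<leftarrow>E js. path_op n P S T)) \<le> B * (\<Sum>P\<leftarrow>E js. cmod (path_op n P S T))"
        unfolding norm_mult using coefB norm_sum_list B0 by (intro mult_mono) auto
    qed
    also have "\<dots> = B * A S T" unfolding A_def by (simp add: sum_distrib_left)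
    finally show ?thesis .
  qed
  have hermL: "\<forall>Y\<in>set (rev (map (Hgam n \<tau> \<nu>) gs)). fadj Y = Y"
    using assms(4,5) by (auto simp: Hgam_def)
  have herm: "cmod (?X S T) = cmod (?X T S)" for S T
    using nest_herm[OF hermL, of n]
  proof
    assume "fadj ?X = ?X"
    then have "fadj ?X T S = ?X T S" by simp
    then have "cnj (?X S T) = ?X T S" by (simp only: fadj_def)
    then show ?thesis by (metis complex_mod_cnj)
  next
    assume eq: "fadj ?X = (\<lambda>S T. - ?X S T)"
    have "fadj ?X T S = - ?X T S" using eq[THEN fun_cong, THEN fun_cong, of T S] by simp
    then have "cnj (?X S T) = - ?X T S" by (simp only: fadj_def)
    then show ?thesis by (metis complex_mod_cnj norm_minus_cancel)
  qed
  have XK: "\<forall>S T. cmod (?X S T) \<le> B * K S T"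
  proof (intro allI)
    fix S T
    have "cmod (?X S T) = (cmod (?X S T) + cmod (?X T S)) / 2" using herm[of S T] by simp
    also have "\<dots> \<le> (B * A S T + B * A T S) / 2" using maj[of S T] maj[of T S] by simp
    finally show "cmod (?X S T) \<le> B * K S T" unfolding K_def by (simp add: field_simps)
  qed
  have A0: "0 \<le> A S T" for S T
    unfolding A_def by (intro sum_nonneg sum_list_nonneg) auto
  have K0: "\<forall>S T. 0 \<le> K S T" unfolding K_def using A0 by (simp add: add_nonneg_nonneg)
  have rowA: "(\<Sum>T\<in>?P. A S T) = (\<Sum>js\<in>J. \<Sum>P\<leftarrow>E js. vnorm n (opvec n (fadj (path_op n P)) (basis S)))"
    if "S \<in> ?P" for S
    unfolding A_def using that
    by (subst sum.swap) (simp add: sum_sum_list_swap vnorm_row path_mono)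
  have colA: "(\<Sum>T\<in>?P. A T S) = (\<Sum>js\<in>J. \<Sum>P\<leftarrow>E js. vnorm n (opvec n (path_op n P) (basis S)))"
    if "S \<in> ?P" for S
    unfolding A_def using that
    by (subst sum.swap) (simp add: sum_sum_list_swap vnorm_col path_mono)
  have degK: "deg n \<tau> \<nu> gs E S = (\<Sum>T\<in>?P. K S T)" if "S \<in> ?P" for S
  proof -
    have "deg n \<tau> \<nu> gs E S = (\<Sum>js\<in>J. ((\<Sum>P\<leftarrow>E js. vnorm n (opvec n (path_op n P) (basis S)))
               + (\<Sum>P\<leftarrow>E js. vnorm n (opvec n (fadj (path_op n P)) (basis S)))) / 2)"
      unfolding deg_def J_def[symmetric] by (simp add: sum_list_half)
    also have "\<dots> = ((\<Sum>T\<in>?P. A T S) + (\<Sum>T\<in>?P. A S T)) / 2"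
      using rowA[OF that] colA[OF that] by (simp add: sum.distrib sum_divide_distrib[symmetric])
    also have "\<dots> = (\<Sum>T\<in>?P. K S T)"
      unfolding K_def by (simp add: sum.distrib sum_divide_distrib[symmetric])
    finally show ?thesis .
  qed
  have Ksym: "K S T = K T S" for S T unfolding K_def by simp
  have finD: "finite {deg n \<tau> \<nu> gs E c | c. c \<subseteq> {..<n} \<and> card c = \<eta>}"
    by (rule finite_subset[of _ "deg n \<tau> \<nu> gs E ` ?P"]) auto
  have DD: "deg n \<tau> \<nu> gs E S \<le> D" if "S \<subseteq> {..<n}" "card S = \<eta>" for S
    unfolding D_def using that by (intro Max_ge[OF finD]) auto
  have vn1: "(\<Sum>S\<in>?P. (cmod (\<phi> S))\<^sup>2) = 1" if "\<phi> \<in> eta_states n \<eta>" for \<phi>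
    using that unfolding eta_states_def vnorm_def by simp
  have bound: "cmod (inner_f n \<phi> (opvec n ?X \<psi>)) \<le> B * D"
    if "\<phi> \<in> eta_states n \<eta>" "\<psi> \<in> eta_states n \<eta>" for \<phi> \<psi>
  proof (rule schur[OF XK K0 B0 _ _ vn1[OF that(1)] vn1[OF that(2)]])
    show "\<forall>S\<in>?P. \<phi> S \<noteq> 0 \<longrightarrow> (\<Sum>T\<in>?P. K S T) \<le> D"
      using that(1) degK DD unfolding eta_states_def by auto
    show "\<forall>T\<in>?P. \<psi> T \<noteq> 0 \<longrightarrow> (\<Sum>S\<in>?P. K S T) \<le> D"
      using that(2) degK DD Ksym unfolding eta_states_def by auto
  qed
  have ne: "basis {..<\<eta>} \<in> eta_states n \<eta>"
  proof -
    have "(\<lambda>S. (cmod (basis {..<\<eta>} S))\<^sup>2) = (\<lambda>S. if S = {..<\<eta>} then 1 else 0)"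
      by (auto simp: basis_def)
    moreover have "{..<\<eta>} \<in> ?P" using assms(2) by auto
    ultimately have "vnorm n (basis {..<\<eta>}) = 1" unfolding vnorm_def by (simp only:) simp
    then show ?thesis using assms(2) unfolding eta_states_def basis_def by auto
  qed
  show ?thesis
    unfolding eta_norm_def B_def[symmetric] D_def[symmetric]
    using bound ne by (intro cSup_least) auto
qed


end
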